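(* Let $U$ be a $d\times d$ unitary matrix, $U_{ij}=\langle a_i|b_j\rangle$ for two orthonormal bases $\{|a_i\rangle\}$, $\{|b_j\rangle\}$ of $\mathbb{C}^d$, and let $p_i=\langle a_i|\rho|a_i\rangle$, $q_j=\langle b_j|\rho|b_j\rangle$ for a state $\rho$ on $\mathbb{C}^d$. For $k=1,\dots,d$ let $s_k=\max\{\|M\|: M \text{ a submatrix of } U \text{ with } \#\mathrm{cols}(M)+\#\mathrm{rows}(M)=k+1\}$, where $\|M\|$ is the largest singular value, and let $W=(s_1,s_2-s_1,\dots,s_d-s_{d-1})$. Then for every $\alpha\ge0$, $$T_\alpha(p)+T_\alpha(q)\ge T_\alpha(W).$$
   Context: The Tsallis (Havrda–Charvat) entropy of order $\alpha\neq1$ of a probability vector $x$ is $T_\alpha(x)=\frac{1}{1-\alpha}\left(\sum_i x_i^\alpha-1\right)$; for $\alpha=1$ it is understood as its limit, the Shannon entropy $-\sum_i x_i\ln x_i$. A submatrix is obtained by selecting a nonempty set of rows and a nonempty set of columns. *)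

theory Defs
  imports "HOL-Analysis.Analysis"
begin

definition braket :: "complex ^ 'n \<Rightarrow> complex ^ 'n \<Rightarrow> complex" where
  "braket x y = (\<Sum>k\<in>UNIV. cnj (x $ k) * y $ k)"

definition sandwich :: "complex ^ 'n \<Rightarrow> complex ^ 'n ^ 'n \<Rightarrow> complex" where
  "sandwich x \<rho> = (\<Sum>k\<in>UNIV. \<Sum>l\<in>UNIV. cnj (x $ k) * \<rho> $ k $ l * x $ l)"

definition orthonormal_basis_fam :: "('n::finite \<Rightarrow> complex ^ 'n) \<Rightarrow> bool" where
  "orthonormal_basis_fam a \<longleftrightarrow> (\<forall>i j. braket (a i) (a j) = (if i = j then 1 else 0))"

definition density_matrix :: "complex ^ 'n ^ 'n \<Rightarrow> bool" where
  "density_matrix \<rho> \<longleftrightarrow>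
     (\<forall>i j. \<rho> $ i $ j = cnj (\<rho> $ j $ i)) \<and>
     (\<forall>x. Im (sandwich x \<rho>) = 0 \<and> Re (sandwich x \<rho>) \<ge> 0) \<and>
     (\<Sum>i\<in>UNIV. \<rho> $ i $ i) = 1"

definition unitary_mat :: "complex ^ 'n ^ 'n \<Rightarrow> bool" where
  "unitary_mat U \<longleftrightarrow> (\<forall>i j. (\<Sum>k\<in>UNIV. cnj (U $ k $ i) * U $ k $ j) = (if i = j then 1 else 0))"

text \<open>Largest singular value (operator 2-norm) of the submatrix of U with row set R and
  column set C, realised as the operator norm of the map C^C -> C^R, x |-> U[R,C] x
  (zero-padded; padding does not change the norm).\<close>
definition submat_norm :: "complex ^ 'n ^ 'n \<Rightarrow> 'n set \<Rightarrow> 'n set \<Rightarrow> real" where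
  "submat_norm U R C = onorm (\<lambda>x::complex ^ 'n.
      (\<chi> i. if i \<in> R then (\<Sum>j\<in>C. U $ i $ j * x $ j) else 0))"

definition s_val :: "complex ^ 'n::finite ^ 'n \<Rightarrow> nat \<Rightarrow> real" where
  "s_val U k = Max {submat_norm U R C | R C. R \<noteq> {} \<and> C \<noteq> {} \<and> card R + card C = k + 1}"

definition W_vec :: "complex ^ 'n::finite ^ 'n \<Rightarrow> nat \<Rightarrow> real" where
  "W_vec U k = (if k = 1 then s_val U 1 else s_val U k - s_val U (k - 1))"

text \<open>Tsallis entropy over a finite index set I; order 1 is the Shannon entropy
  (with 0 ln 0 = 0). Note 0 powr a = 0 in Isabelle, i.e. sums run over the support.\<close>
definition tsallis :: "real \<Rightarrow> 'a set \<Rightarrow> ('a \<Rightarrow> real) \<Rightarrow> real" where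
  "tsallis \<alpha> I x = (if \<alpha> = 1 then - (\<Sum>i\<in>I. if x i = 0 then 0 else x i * ln (x i))
                    else ((\<Sum>i\<in>I. x i powr \<alpha>) - 1) / (1 - \<alpha>))"

end

theory Submission
  imports Defs
begin

lemma powr_tangent_ge1:
  fixes t p :: real assumes "t > 0" "p \<ge> 1"
  shows "p * (t - 1) \<le> t powr p - 1"
proof -
  have d: "((\<lambda>x. x powr p) has_real_derivative p * 1 powr (p - 1)) (at 1 within {0<..})"
    by (auto intro!: derivative_eq_intros)
  have "p * 1 powr (p - 1) * (t - 1) \<le> t powr p - 1 powr p"
    by (rule convex_on_imp_above_tangent[OF powr_convex[OF assms(2)] _ _ _ d])
       (use assms in \<open>auto simp: interior_open convex_connected\<close>)
  then show ?thesis by simp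
qed

lemma powr_tangent_le1:
  fixes t p :: real assumes "t > 0" "0 \<le> p" "p \<le> 1"
  shows "t powr p - 1 \<le> p * (t - 1)"
proof (cases "p = 0")
  case True then show ?thesis using assms by simp
next
  case False
  then have pp: "p > 0" using assms by simp
  have "(1/p) * (t powr p - 1) \<le> (t powr p) powr (1/p) - 1"
    by (rule powr_tangent_ge1) (use assms pp in auto)
  also have "(t powr p) powr (1/p) = t" using pp assms by (simp add: powr_powr)
  finally have "(1/p) * (t powr p - 1) \<le> t - 1" .
  then show ?thesis using pp by (simp add: field_simps)
qed

definition tf :: "real \<Rightarrow> real \<Rightarrow> real" where
  "tf a t = (if a = 1 then (if t = 0 then 0 else - t * ln t) else (t powr a - t) / (1 - a))"

definition tg :: "real \<Rightarrow> real \<Rightarrow> real" where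
  "tg a t = (if a = 1 then - ln t - 1 else (a * t powr (a - 1) - 1) / (1 - a))"

lemma tf_0[simp]: "tf a 0 = 0" by (simp add: tf_def)
lemma tf_1[simp]: "tf a 1 = 0" by (simp add: tf_def)

lemma tf_super:
  fixes a x y :: real assumes a: "a \<ge> 0" and x: "x > 0" and y: "y \<ge> 0"
  shows "tf a y \<le> tf a x + tg a x * (y - x)"
proof (cases "a = 1")
  case True
  show ?thesis
  proof (cases "y = 0")
    case True
    then show ?thesis using \<open>a = 1\<close> x by (simp add: tf_def tg_def algebra_simps)
  next
    case False
    then have yp: "y > 0" using y by simp
    have "ln (x / y) \<le> x / y - 1" using x yp by (intro ln_le_minus_one) auto
    then have "y * ln (x / y) \<le> y * (x / y - 1)" using yp by (intro mult_left_mono) auto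
    moreover have "y * (x / y - 1) = x - y" using yp by (simp add: field_simps)
    ultimately have h: "y * ln x - y * ln y \<le> x - y" using x yp by (simp add: ln_div right_diff_distrib)
    have e1: "tf a y = - y * ln y" using \<open>a = 1\<close> False by (simp add: tf_def)
    have e2: "tf a x + tg a x * (y - x) = - y * ln x - y + x" using \<open>a = 1\<close> x
      by (simp add: tf_def tg_def algebra_simps)
    show ?thesis using h e1 e2 by linarith
  qed
next
  case False
  have key: "(1 - a) * (y powr a) \<le> (1 - a) * (x powr a + a * x powr (a - 1) * (y - x))"
  proof (cases "y = 0")
    case True
    have "x powr (a - 1) * x = x powr a" using x by (simp add: powr_diff)
    then have "x powr a + a * x powr (a - 1) * (0 - x) = (1 - a) * x powr a"
      by (simp add: algebra_simps)
    moreover have "0 \<le> (1 - a) * ((1 - a) * x powr a)"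
      using mult_nonneg_nonneg[of "(1-a)*(1-a)" "x powr a"] by (simp add: mult.assoc)
    ultimately show ?thesis using True by simp
  next
    case yne: False
    then have yp: "y > 0" using y by simp
    define t where "t = y / x"
    have tp: "t > 0" using x yp by (simp add: t_def)
    have yt: "y = x * t" using x by (simp add: t_def)
    have ypow: "y powr a = x powr a * t powr a" using yt x tp by (simp add: powr_mult)
    have xa1: "x powr (a - 1) = x powr a / x" using x by (simp add: powr_diff)
    have rhs: "x powr a + a * x powr (a - 1) * (y - x) = x powr a * (1 + a * (t - 1))"
      using x by (simp add: xa1 yt field_simps)
    have xpa: "x powr a > 0" using x by simp
    show ?thesis
    proof (cases "a \<le> 1")
      case True
      have "t powr a \<le> 1 + a * (t - 1)" using powr_tangent_le1[OF tp a True] by simp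
      then have "x powr a * t powr a \<le> x powr a * (1 + a * (t - 1))"
        using xpa by (intro mult_left_mono) auto
      then show ?thesis using True unfolding ypow rhs by (simp add: mult_left_mono)
    next
      case False
      have "1 + a * (t - 1) \<le> t powr a" using powr_tangent_ge1[OF tp, of a] False by simp
      then have "x powr a * (1 + a * (t - 1)) \<le> x powr a * t powr a"
        using xpa by (intro mult_left_mono) auto
      then have "(1 - a) * (x powr a * t powr a) \<le> (1 - a) * (x powr a * (1 + a * (t - 1)))"
        using False by (simp add: mult_left_mono_neg)
      then show ?thesis unfolding ypow rhs .
    qed
  qed
  have e: "tf a x + tg a x * (y - x) = (x powr a + a * x powr (a - 1) * (y - x) - y) / (1 - a)"
  proof -
    have "tf a x + tg a x * (y - x) = (x powr a - x)/(1-a) + ((a*x powr (a-1) - 1)*(y-x))/(1-a)"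
      using False by (simp add: tf_def tg_def)
    also have "\<dots> = ((x powr a - x) + (a*x powr (a-1) - 1)*(y-x))/(1-a)"
      by (simp add: add_divide_distrib)
    also have "\<dots> = (x powr a + a * x powr (a - 1) * (y - x) - y) / (1 - a)"
      by (rule arg_cong[where f="\<lambda>z. z/(1-a)"]) (simp add: algebra_simps)
    finally show ?thesis .
  qed
  show ?thesis
  proof (cases "a < 1")
    case True
    then have "y powr a \<le> x powr a + a * x powr (a - 1) * (y - x)" using key by simp
    then show ?thesis unfolding e using True False by (simp add: tf_def divide_right_mono)
  next
    case f2: False
    then have "1 - a < 0" using False by simp
    then have "x powr a + a * x powr (a - 1) * (y - x) \<le> y powr a" using key
      by (simp add: mult_le_cancel_left)
    then show ?thesis unfolding e using f2 False by (simp add: tf_def divide_right_mono_neg)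
  qed
qed

lemma tg_mono:
  fixes a x x' :: real assumes a: "a \<ge> 0" and x: "x > 0" and xx: "x \<le> x'"
  shows "tg a x' \<le> tg a x"
proof (cases "a = 1")
  case True then show ?thesis using x xx by (simp add: tg_def)
next
  case False
  show ?thesis
  proof (cases "a < 1")
    case True
    have "x' powr (a - 1) \<le> x powr (a - 1)" using x xx True by (intro powr_mono2') auto
    then have "a * x' powr (a - 1) \<le> a * x powr (a - 1)" using a by (intro mult_left_mono) auto
    then show ?thesis using True by (simp add: tg_def divide_right_mono)
  next
    case f2: False
    have "x powr (a - 1) \<le> x' powr (a - 1)" using x xx f2 by (intro powr_mono2) auto
    then have "a * x powr (a - 1) \<le> a * x' powr (a - 1)" using a by (intro mult_left_mono) auto
    then show ?thesis using f2 False by (simp add: tg_def divide_right_mono_neg)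
  qed
qed

lemma abel_ineq:
  fixes G d :: "nat \<Rightarrow> real"
  assumes D: "\<And>k. k \<le> m \<Longrightarrow> 0 \<le> (\<Sum>i<k. d i)"
    and G: "\<And>i j. i \<le> j \<Longrightarrow> j < m \<Longrightarrow> G i \<le> G j"
  shows "(\<Sum>i<m. G i * d i) \<le> G (m - 1) * (\<Sum>i<m. d i)"
  using D G
proof (induction m)
  case 0 then show ?case by simp
next
  case (Suc m)
  have IH: "(\<Sum>i<m. G i * d i) \<le> G (m - 1) * (\<Sum>i<m. d i)"
    using Suc.prems by (intro Suc.IH) auto
  show ?case
  proof (cases "m = 0")
    case True then show ?thesis by simp
  next
    case False
    have "G (m - 1) \<le> G m" using Suc.prems(2)[of "m - 1" m] False by simp
    then have "G (m - 1) * (\<Sum>i<m. d i) \<le> G m * (\<Sum>i<m. d i)"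
      using Suc.prems(1)[of m] by (intro mult_right_mono) auto
    with IH show ?thesis by (simp add: algebra_simps)
  qed
qed

lemma karamata:
  fixes x y :: "nat \<Rightarrow> real" and a :: real
  assumes a: "a \<ge> 0"
    and dec: "\<And>i j. i \<le> j \<Longrightarrow> j < n \<Longrightarrow> x j \<le> x i"
    and x0: "\<And>i. i < n \<Longrightarrow> 0 \<le> x i" and y0: "\<And>i. i < n \<Longrightarrow> 0 \<le> y i"
    and part: "\<And>k. k \<le> n \<Longrightarrow> (\<Sum>i<k. x i) \<le> (\<Sum>i<k. y i)"
    and tot: "(\<Sum>i<n. x i) = (\<Sum>i<n. y i)"
  shows "(\<Sum>i<n. tf a (y i)) \<le> (\<Sum>i<n. tf a (x i))"
proof -
  define m where "m = (LEAST i. i = n \<or> x i = 0)"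
  have mn: "m \<le> n" unfolding m_def by (rule Least_le) simp
  have xpos: "x i > 0" if "i < m" for i
  proof -
    have "\<not> (i = n \<or> x i = 0)" using not_less_Least[of i "\<lambda>i. i = n \<or> x i = 0"] that
      unfolding m_def by blast
    then show ?thesis using x0[of i] that mn by auto
  qed
  have xz: "x i = 0" if "m \<le> i" "i < n" for i
  proof -
    have "m = n \<or> x m = 0" unfolding m_def by (rule LeastI[of _ n]) simp
    then have "x m = 0" using that by auto
    then show ?thesis using dec[of m i] that x0[of i] by auto
  qed
  have split: "\<And>h::nat\<Rightarrow>real. (\<Sum>i<n. h i) = (\<Sum>i<m. h i) + (\<Sum>i\<in>{m..<n}. h i)"
    using mn by (metis lessThan_atLeast0 sum.atLeastLessThan_concat zero_le)
  have xtail: "(\<Sum>i\<in>{m..<n}. x i) = 0" using xz by simp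
  have ym: "(\<Sum>i<m. y i) \<le> (\<Sum>i<n. y i)"
    using split[of y] y0 by (auto intro!: sum_nonneg)
  have Dm: "(\<Sum>i<m. x i) = (\<Sum>i<m. y i)"
    using part[OF mn] split[of x] xtail tot ym by linarith
  have ytail0: "(\<Sum>i\<in>{m..<n}. y i) = 0" using split[of x] split[of y] xtail tot Dm by linarith
  have yz: "y i = 0" if "m \<le> i" "i < n" for i
    using ytail0 sum_nonneg_eq_0_iff[of "{m..<n}" y] y0 that by auto
  have "(\<Sum>i<n. tf a (y i)) - (\<Sum>i<n. tf a (x i)) = (\<Sum>i<m. tf a (y i) - tf a (x i))"
    using split[of "\<lambda>i. tf a (y i)"] split[of "\<lambda>i. tf a (x i)"] xz yz
    by (simp add: sum_subtractf)
  also have "\<dots> \<le> (\<Sum>i<m. tg a (x i) * (y i - x i))"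
    by (intro sum_mono) (use tf_super[OF a] xpos y0 mn in \<open>auto simp: algebra_simps\<close>)
  also have "\<dots> \<le> tg a (x (m - 1)) * (\<Sum>i<m. y i - x i)"
  proof (rule abel_ineq)
    show "0 \<le> (\<Sum>i<k. y i - x i)" if "k \<le> m" for k
      using part[of k] that mn by (simp add: sum_subtractf)
    show "tg a (x i) \<le> tg a (x j)" if "i \<le> j" "j < m" for i j
      by (rule tg_mono[OF a xpos]) (use that dec mn in auto)
  qed
  also have "\<dots> = 0" using Dm by (simp add: sum_subtractf)
  finally show ?thesis by simp
qed


lemma cms1: "z * cnj z = (complex_of_real (cmod z))^2"
  by (metis complex_norm_square of_real_power)
lemma cms2: "cnj z * z = (complex_of_real (cmod z))^2"
  by (metis cms1 mult.commute)

lemma if_sq: "(cmod (if P then z else 0))^2 = (if P then (cmod z)^2 else 0)" by simp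

lemma norm_sq_vec: "(norm (x::complex^'n))^2 = (\<Sum>k\<in>UNIV. (cmod (x$k))^2)"
  unfolding norm_vec_def L2_set_def by (simp add: sum_nonneg)

lemma norm_vec_mono:
  fixes x y :: "complex^'n" assumes "\<And>i. cmod (x$i) \<le> cmod (y$i)"
  shows "norm x \<le> norm y"
  unfolding norm_vec_def by (rule L2_set_mono) (use assms in auto)

lemma braket_self: "braket x x = of_real ((norm x)^2)"
  unfolding braket_def norm_sq_vec of_real_sum
  by (intro sum.cong) (auto simp: cms1 cms2)

lemma braket_cs: "cmod (braket x y) \<le> norm x * norm y"
proof -
  have "cmod (braket x y) \<le> (\<Sum>k\<in>UNIV. \<bar>cmod (x$k)\<bar> * \<bar>cmod (y$k)\<bar>)"
    unfolding braket_def by (rule order_trans[OF norm_sum]) (simp add: norm_mult)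
  also have "\<dots> \<le> L2_set (\<lambda>k. cmod (x$k)) UNIV * L2_set (\<lambda>k. cmod (y$k)) UNIV"
    by (rule L2_set_mult_ineq)
  finally show ?thesis by (simp add: norm_vec_def)
qed

lemma braket_add_left: "braket (x + y) z = braket x z + braket y z"
  unfolding braket_def by (simp add: sum.distrib ring_distribs)
lemma braket_add_right: "braket z (x + y) = braket z x + braket z y"
  unfolding braket_def by (simp add: sum.distrib ring_distribs)
lemma braket_scale_left: "braket (c *s x) z = cnj c * braket x z"
  unfolding braket_def by (simp add: sum_distrib_left mult.assoc)
lemma braket_scale_right: "braket z (c *s x) = c * braket z x"
  unfolding braket_def by (simp add: sum_distrib_left mult.assoc mult.left_commute)
lemma braket_sum_left: "finite S \<Longrightarrow> braket (\<Sum>i\<in>S. f i) z = (\<Sum>i\<in>S. braket (f i) z)"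
  by (induction S rule: finite_induct) (auto simp: braket_add_left, simp add: braket_def)
lemma braket_sum_right: "finite S \<Longrightarrow> braket z (\<Sum>i\<in>S. f i) = (\<Sum>i\<in>S. braket z (f i))"
  by (induction S rule: finite_induct) (auto simp: braket_add_right, simp add: braket_def)
lemma braket_cnj: "braket y x = cnj (braket x y)"
  unfolding braket_def by (simp add: mult.commute)

definition Fm :: "complex ^ 'n ^ 'n \<Rightarrow> 'n set \<Rightarrow> 'n set \<Rightarrow> complex^'n \<Rightarrow> complex^'n" where
  "Fm U R C = (\<lambda>x. \<chi> i. if i \<in> R then (\<Sum>j\<in>C. U $ i $ j * x $ j) else 0)"

lemma submat_norm_Fm: "submat_norm U R C = onorm (Fm U R C)"
  unfolding submat_norm_def Fm_def ..

lemma Fm_bl: "bounded_linear (Fm U R C)"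
proof -
  have "linear (Fm U R C)"
    by (rule linearI)
       (auto simp: Fm_def vec_eq_iff sum.distrib ring_distribs scaleR_sum_right mult_scaleR_right)
  then show ?thesis by (simp add: linear_conv_bounded_linear)
qed

lemma submat_norm_nonneg: "0 \<le> submat_norm U R C"
  unfolding submat_norm_Fm by (rule onorm_pos_le[OF Fm_bl])

lemma Fm_bound: "norm (Fm U R C x) \<le> submat_norm U R C * norm x"
  unfolding submat_norm_Fm by (rule onorm[OF Fm_bl])

lemma ortho_sum_delta:
  assumes "orthonormal_basis_fam a" "i \<in> R" "finite R"
  shows "(\<Sum>i'\<in>R. f i' * braket (a i) (a i')) = f i"
proof -
  have h: "\<forall>i'. braket (a i) (a i') = (if i = i' then 1 else 0)"
    using assms(1) unfolding orthonormal_basis_fam_def by blast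
  show ?thesis using assms(2,3) by (simp add: h if_distrib cong: if_cong)
qed

lemma ortho_sum_delta2:
  assumes "orthonormal_basis_fam a" "i \<in> R" "finite R"
  shows "(\<Sum>i'\<in>R. f i' * braket (a i') (a i)) = f i"
proof -
  have h: "\<forall>i'. braket (a i') (a i) = (if i = i' then 1 else 0)"
    using assms(1) unfolding orthonormal_basis_fam_def by auto
  show ?thesis using assms(2,3) by (simp add: h if_distrib cong: if_cong)
qed

lemma pure_bound:
  fixes a b :: "'n::finite \<Rightarrow> complex ^ 'n" and U :: "complex^'n^'n"
  assumes oa: "orthonormal_basis_fam a" and ob: "orthonormal_basis_fam b"
    and Uab: "\<And>i j. U $ i $ j = braket (a i) (b j)"
  shows "(\<Sum>i\<in>R. (cmod (braket (a i) x))^2) + (\<Sum>j\<in>C. (cmod (braket (b j) x))^2)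
          \<le> (1 + submat_norm U R C) * (norm x)^2"
proof -
  define al where "al i = braket (a i) x" for i
  define be where "be j = braket (b j) x" for j
  define A2 where "A2 = (\<Sum>i\<in>R. (cmod (al i))^2)"
  define B2 where "B2 = (\<Sum>j\<in>C. (cmod (be j))^2)"
  define c where "c = submat_norm U R C"
  define u where "u = (\<Sum>i\<in>R. al i *s a i)"
  define v where "v = (\<Sum>j\<in>C. be j *s b j)"
  have A2nn: "0 \<le> A2" unfolding A2_def by (simp add: sum_nonneg)
  have B2nn: "0 \<le> B2" unfolding B2_def by (simp add: sum_nonneg)
  have c0: "0 \<le> c" unfolding c_def by (rule submat_norm_nonneg)
  have ux: "braket u x = of_real A2"
    unfolding u_def A2_def braket_sum_left[OF finite] braket_scale_left of_real_sum
    by (intro sum.cong) (auto simp: al_def cms1 cms2)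
  have vx: "braket v x = of_real B2"
    unfolding v_def B2_def braket_sum_left[OF finite] braket_scale_left of_real_sum
    by (intro sum.cong) (auto simp: be_def cms1 cms2)
  have uu: "braket u u = of_real A2"
  proof -
    have "braket u u = (\<Sum>i\<in>R. al i * (\<Sum>i'\<in>R. cnj (al i') * braket (a i') (a i)))"
      unfolding u_def braket_sum_left[OF finite] braket_sum_right[OF finite] braket_scale_left
        braket_scale_right ..
    also have "\<dots> = (\<Sum>i\<in>R. cnj (al i) * al i)"
      by (intro sum.cong refl) (simp add: ortho_sum_delta2[OF oa] mult.commute)
    also have "\<dots> = of_real A2" unfolding A2_def of_real_sum
      by (intro sum.cong) (auto simp: cms1 cms2)
    finally show ?thesis .
  qed
  have vv: "braket v v = of_real B2"
  proof -
    have "braket v v = (\<Sum>i\<in>C. be i * (\<Sum>i'\<in>C. cnj (be i') * braket (b i') (b i)))"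
      unfolding v_def braket_sum_left[OF finite] braket_sum_right[OF finite] braket_scale_left
        braket_scale_right ..
    also have "\<dots> = (\<Sum>i\<in>C. cnj (be i) * be i)"
      by (intro sum.cong refl) (simp add: ortho_sum_delta2[OF ob] mult.commute)
    also have "\<dots> = of_real B2" unfolding B2_def of_real_sum
      by (intro sum.cong) (auto simp: cms1 cms2)
    finally show ?thesis .
  qed
  have nu: "norm u = sqrt A2"
    using uu braket_self[of u] by (metis norm_ge_zero of_real_eq_iff real_sqrt_unique)
  have nv: "norm v = sqrt B2"
    using vv braket_self[of v] by (metis norm_ge_zero of_real_eq_iff real_sqrt_unique)
  have uv: "cmod (braket u v) \<le> c * (sqrt A2 * sqrt B2)"
  proof -
    define z where "z = (\<chi> j. if j \<in> C then be j else 0)"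
    define al' where "al' = (\<chi> i. if i \<in> R then al i else 0)"
    have nz: "(norm z)^2 = B2" unfolding norm_sq_vec z_def B2_def
      by (simp only: vec_lambda_beta if_sq sum.If_cases finite) simp
    have nal: "(norm al')^2 = A2" unfolding norm_sq_vec al'_def A2_def
      by (simp only: vec_lambda_beta if_sq sum.If_cases finite) simp
    have "braket u v = (\<Sum>j\<in>C. be j * (\<Sum>i\<in>R. cnj (al i) * braket (a i) (b j)))"
      unfolding u_def v_def braket_sum_left[OF finite] braket_sum_right[OF finite] braket_scale_left
        braket_scale_right ..
    also have "\<dots> = (\<Sum>i\<in>R. cnj (al i) * (\<Sum>j\<in>C. U $ i $ j * be j))"
      unfolding Uab sum_distrib_left by (subst sum.swap) (simp add: mult_ac)
    also have "\<dots> = braket al' (Fm U R C z)"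
      unfolding braket_def al'_def Fm_def z_def
      by (simp add: if_distrib sum.If_cases mult.commute cong: if_cong)
    finally have "cmod (braket u v) \<le> norm al' * norm (Fm U R C z)"
      using braket_cs by simp
    also have "\<dots> \<le> norm al' * (c * norm z)"
      by (intro mult_left_mono) (auto simp: c_def Fm_bound)
    also have "norm al' = sqrt A2" using nal by (metis norm_ge_zero real_sqrt_unique)
    also have "norm z = sqrt B2" using nz by (metis norm_ge_zero real_sqrt_unique)
    finally show ?thesis by (simp add: algebra_simps)
  qed
  have "(norm (u + v))^2 = Re (braket (u + v) (u + v))" by (simp add: braket_self)
  also have "\<dots> = A2 + B2 + 2 * Re (braket u v)"
    by (simp add: braket_add_left braket_add_right uu vv braket_cnj[of v u])
  also have "\<dots> \<le> A2 + B2 + 2 * (c * (sqrt A2 * sqrt B2))"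
    using uv complex_Re_le_cmod[of "braket u v"] by linarith
  also have "\<dots> \<le> (1 + c) * (A2 + B2)"
  proof -
    have "2 * (sqrt A2 * sqrt B2) \<le> A2 + B2"
      using sum_squares_bound[of "sqrt A2" "sqrt B2"] A2nn B2nn by (simp add: power2_eq_square) 
    then have "c * (2 * (sqrt A2 * sqrt B2)) \<le> c * (A2 + B2)" using c0 by (rule mult_left_mono)
    then show ?thesis by (simp add: algebra_simps)
  qed
  finally have n2: "(norm (u + v))^2 \<le> (1 + c) * (A2 + B2)" .
  have "A2 + B2 = Re (braket (u + v) x)" by (simp add: braket_add_left ux vx)
  also have "\<dots> \<le> norm (u + v) * norm x"
    using braket_cs[of "u + v" x] complex_Re_le_cmod by (meson order_trans)
  finally have S: "A2 + B2 \<le> norm (u + v) * norm x" .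
  have "(A2 + B2)^2 \<le> (norm (u + v) * norm x)^2"
    using S A2nn B2nn by (intro power_mono) auto
  also have "\<dots> = (norm (u+v))^2 * (norm x)^2" by (simp add: power_mult_distrib)
  also have "\<dots> \<le> ((1 + c) * (A2 + B2)) * (norm x)^2" using n2 by (intro mult_right_mono) auto
  finally have "(A2 + B2) * (A2 + B2) \<le> (A2 + B2) * ((1 + c) * (norm x)^2)"
    by (simp add: power2_eq_square algebra_simps)
  then have "A2 + B2 \<le> (1 + c) * (norm x)^2"
    using A2nn B2nn by (cases "A2 + B2 = 0") (auto simp: mult_le_cancel_left zero_le_mult_iff c0)
  then show ?thesis unfolding A2_def B2_def c_def al_def be_def .
qed


definition bil :: "complex^'n \<Rightarrow> complex^'n^'n \<Rightarrow> complex^'n \<Rightarrow> complex" where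
  "bil x M y = (\<Sum>k\<in>UNIV. \<Sum>l\<in>UNIV. cnj (x $ k) * M $ k $ l * y $ l)"

definition trc :: "complex^'n^'n \<Rightarrow> complex^'n^'n \<Rightarrow> complex" where
  "trc \<rho> M = (\<Sum>k\<in>UNIV. \<Sum>l\<in>UNIV. \<rho> $ k $ l * M $ l $ k)"

definition herm :: "complex^'n^'n \<Rightarrow> bool" where
  "herm \<rho> \<longleftrightarrow> (\<forall>i j. \<rho> $ i $ j = cnj (\<rho> $ j $ i))"

definition psdf :: "complex^'n^'n \<Rightarrow> bool" where
  "psdf \<rho> \<longleftrightarrow> (\<forall>x. 0 \<le> Re (sandwich x \<rho>))"

lemma sandwich_bil: "sandwich x M = bil x M x"
  unfolding sandwich_def bil_def ..

lemma bil_add_left: "bil (x + y) M z = bil x M z + bil y M z"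
  unfolding bil_def by (simp add: sum.distrib ring_distribs)
lemma bil_add_right: "bil z M (x + y) = bil z M x + bil z M y"
  unfolding bil_def by (simp add: sum.distrib ring_distribs)
lemma bil_scale_left: "bil (c *s x) M z = cnj c * bil x M z"
  unfolding bil_def by (simp add: sum_distrib_left mult.assoc)
lemma bil_scale_right: "bil z M (c *s x) = c * bil z M x"
  unfolding bil_def by (simp add: sum_distrib_left mult_ac)
lemma ifm1: "(if P then (1::complex) else 0) * z = (if P then z else 0)" by simp
lemma ifm2: "z * (if P then (1::complex) else 0) = (if P then z else 0)" by simp
lemma cnj_if10: "cnj (if P then (1::complex) else 0) = (if P then 1 else 0)" by simp

lemma bil_axis: "bil (axis k 1) M (axis l 1) = M $ k $ l"
  unfolding bil_def axis_def by (simp add: ifm1 ifm2 cnj_if10 sum.delta')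

lemma herm_bil: assumes "herm \<rho>" shows "bil y \<rho> x = cnj (bil x \<rho> y)"
proof -
  have h: "cnj (\<rho> $ k $ l) = \<rho> $ l $ k" for k l
  proof -
    have "\<rho> $ l $ k = cnj (\<rho> $ k $ l)" using assms unfolding herm_def by blast
    then show ?thesis by simp
  qed
  have "cnj (bil x \<rho> y) = (\<Sum>k\<in>UNIV. \<Sum>l\<in>UNIV. x$k * cnj (\<rho>$k$l) * cnj (y$l))"
    unfolding bil_def by simp
  also have "\<dots> = (\<Sum>k\<in>UNIV. \<Sum>l\<in>UNIV. cnj (y$l) * \<rho>$l$k * x$k)"
    unfolding h by (simp only: mult.commute mult.left_commute)
  also have "\<dots> = bil y \<rho> x" unfolding bil_def by (rule sum.swap)
  finally show ?thesis by simp
qed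

lemma diag_real:
  assumes "herm \<rho>" "psdf \<rho>" shows "\<rho> $ k $ k = of_real (Re (\<rho> $ k $ k))" "0 \<le> Re (\<rho> $ k $ k)"
proof -
  have "\<rho> $ k $ k = cnj (\<rho> $ k $ k)" using assms(1) unfolding herm_def by blast
  then have "Im (\<rho> $ k $ k) = 0" by (metis Reals_cnj_iff complex_is_Real_iff)
  then show "\<rho> $ k $ k = of_real (Re (\<rho> $ k $ k))" by (simp add: complex_eq_iff)
  have "0 \<le> Re (sandwich (axis k 1) \<rho>)" using assms(2) unfolding psdf_def by blast
  then show "0 \<le> Re (\<rho> $ k $ k)" by (simp add: sandwich_bil bil_axis)
qed

lemma zero_diag_row:
  assumes h: "herm \<rho>" and p: "psdf \<rho>" and z: "\<rho> $ k $ k = 0"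
  shows "\<rho> $ k $ l = 0"
proof (rule ccontr)
  assume nz: "\<rho> $ k $ l \<noteq> 0"
  then have kl: "k \<noteq> l" using z by auto
  define r where "r = \<rho> $ k $ l"
  define s :: real where "s = (Re (\<rho> $ l $ l) + 1) / (2 * (cmod r)^2)"
  define t where "t = - (of_real s * r)"
  define x where "x = t *s axis k 1 + axis l 1"
  have rlk: "\<rho> $ l $ k = cnj r" using h unfolding herm_def r_def by blast
  have "sandwich x \<rho> = cnj t * t * \<rho> $ k $ k + cnj t * \<rho> $ k $ l + t * \<rho> $ l $ k + \<rho> $ l $ l"
    unfolding x_def sandwich_bil
    by (simp add: bil_add_left bil_add_right bil_scale_left bil_scale_right bil_axis algebra_simps)
  also have "\<dots> = - (of_real s * (cnj r * r)) - (of_real s * (cnj r * r)) + \<rho> $ l $ l"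
    using z rlk by (simp add: t_def r_def algebra_simps)
  finally have "Re (sandwich x \<rho>) = - 2 * s * (cmod r)^2 + Re (\<rho> $ l $ l)"
    by (simp add: cms2 Re_complex_of_real)
  also have "\<dots> = -1" using nz by (simp add: s_def r_def field_simps)
  finally show False using p unfolding psdf_def by (metis neg_0_le_iff_le not_one_le_zero)
qed

lemma bil_axis_right: "bil x M (axis k 1) = (\<Sum>a\<in>UNIV. cnj (x$a) * M$a$k)"
  unfolding bil_def axis_def by (simp add: ifm1 ifm2 cnj_if10 sum.delta')
lemma ifm3: "(if P then a else (0::complex)) * b = (if P then a * b else 0)" by simp
lemma bil_axis_left: "bil (axis k 1) M x = (\<Sum>b\<in>UNIV. M$k$b * x$b)"
  unfolding bil_def axis_def by (subst sum.swap) (simp add: ifm1 ifm2 ifm3 cnj_if10 sum.delta')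

lemma psd_trace:
  fixes \<rho> B :: "complex^'n^'n"
  assumes "herm \<rho>" "psdf \<rho>" "psdf B"
  shows "0 \<le> Re (trc \<rho> B)"
  using assms
proof (induction "card {k. \<exists>l. \<rho>$k$l \<noteq> 0}" arbitrary: \<rho> rule: less_induct)
  case less
  note h = less.prems(1) and p = less.prems(2) and pB = less.prems(3)
  show ?case
  proof (cases "{k. \<exists>l. \<rho>$k$l \<noteq> 0} = {}")
    case True
    then have "\<forall>k l. \<rho>$k$l = 0" by auto
    then show ?thesis by (simp add: trc_def)
  next
    case False
    then obtain k l0 where kl0: "\<rho>$k$l0 \<noteq> 0" by auto
    then have kk: "\<rho>$k$k \<noteq> 0" using zero_diag_row[OF h p] by blast
    define r where "r = Re (\<rho>$k$k)"
    have rk: "\<rho>$k$k = of_real r" using diag_real(1)[OF h p] r_def by blast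
    have "r \<noteq> 0" using kk rk by auto
    moreover have "0 \<le> r" using diag_real(2)[OF h p, of k] r_def by simp
    ultimately have rpos: "r > 0" by simp
    have hc: "cnj (\<rho> $ a $ b) = \<rho> $ b $ a" for a b
    proof -
      have "\<rho> $ b $ a = cnj (\<rho> $ a $ b)" using h unfolding herm_def by blast
      then show ?thesis by simp
    qed
    define \<rho>' where "\<rho>' = (\<chi> i j. \<rho>$i$j - \<rho>$i$k * \<rho>$k$j / \<rho>$k$k)"
    define w where "w = (\<chi> i. \<rho>$i$k / of_real (sqrt r))"
    have decomp: "\<rho>$i$j = \<rho>'$i$j + w$i * cnj (w$j)" for i j
    proof -
      have "w$i * cnj (w$j) = \<rho>$i$k * \<rho>$k$j / of_real r"
      proof -
        have sq: "(complex_of_real (sqrt r))^2 = complex_of_real r"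
          using rpos by (metis of_real_power real_sqrt_pow2 less_imp_le)
        show ?thesis using rpos by (simp add: w_def hc power2_eq_square[symmetric] sq)
      qed
      then show ?thesis by (simp add: \<rho>'_def rk)
    qed
    have trsplit: "trc \<rho> B = trc \<rho>' B + sandwich w B"
    proof -
      have "trc \<rho> B = trc \<rho>' B + (\<Sum>a\<in>UNIV. \<Sum>b\<in>UNIV. w$a * cnj (w$b) * B$b$a)"
        unfolding trc_def decomp[of _ _] by (simp add: ring_distribs sum.distrib)
      also have "(\<Sum>a\<in>UNIV. \<Sum>b\<in>UNIV. w$a * cnj (w$b) * B$b$a) = sandwich w B"
        unfolding sandwich_def by (subst sum.swap) (simp add: mult_ac)
      finally show ?thesis .
    qed
    have herm': "herm \<rho>'"
      unfolding herm_def \<rho>'_def using rk by (simp add: hc)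
    have psd': "psdf \<rho>'"
      unfolding psdf_def
    proof
      fix x :: "complex^'n"
      define e :: "complex^'n" where "e = axis k 1"
      define w0 where "w0 = bil e \<rho> x"
      define t where "t = - w0 / \<rho>$k$k"
      have xe: "bil x \<rho> e = cnj w0" unfolding w0_def by (rule herm_bil[OF h])
      have ee: "bil e \<rho> e = \<rho>$k$k" unfolding e_def by (rule bil_axis)
      have s1: "sandwich x \<rho>' = bil x \<rho> x - bil x \<rho> e * w0 / \<rho>$k$k"
      proof -
        have "sandwich x \<rho>' = bil x \<rho> x -
            (\<Sum>a\<in>UNIV. \<Sum>b\<in>UNIV. cnj (x$a) * \<rho>$a$k * (\<rho>$k$b * x$b)) / \<rho>$k$k"
          unfolding sandwich_def bil_def \<rho>'_def
          by (simp add: ring_distribs sum_subtractf sum_divide_distrib mult_ac)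
        also have "(\<Sum>a\<in>UNIV. \<Sum>b\<in>UNIV. cnj (x$a) * \<rho>$a$k * (\<rho>$k$b * x$b)) = bil x \<rho> e * w0"
          unfolding w0_def e_def bil_axis_right bil_axis_left sum_product ..
        finally show ?thesis .
      qed
      have s2: "sandwich (x + t *s e) \<rho> = bil x \<rho> x + t * bil x \<rho> e + cnj t * w0 + cnj t * t * \<rho>$k$k"
        unfolding sandwich_bil w0_def
        by (simp add: bil_add_left bil_add_right bil_scale_left bil_scale_right ee algebra_simps)
      have "sandwich x \<rho>' = sandwich (x + t *s e) \<rho>"
        apply (subst s2, subst s1, unfold xe t_def)
        using kk rk by (simp add: field_simps)
      then show "0 \<le> Re (sandwich x \<rho>')" using p unfolding psdf_def by simp
    qed
    have sub: "{i. \<exists>l. \<rho>'$i$l \<noteq> 0} \<subset> {i. \<exists>l. \<rho>$i$l \<noteq> 0}"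
    proof
      show "{i. \<exists>l. \<rho>'$i$l \<noteq> 0} \<subseteq> {i. \<exists>l. \<rho>$i$l \<noteq> 0}"
        unfolding \<rho>'_def by (auto, metis div_0 mult_zero_left)
      have "\<rho>'$k$j = 0" for j unfolding \<rho>'_def using kk by simp
      then show "{i. \<exists>l. \<rho>'$i$l \<noteq> 0} \<noteq> {i. \<exists>l. \<rho>$i$l \<noteq> 0}" using kl0 by blast
    qed
    have "card {i. \<exists>l. \<rho>'$i$l \<noteq> 0} < card {i. \<exists>l. \<rho>$i$l \<noteq> 0}"
      by (rule psubset_card_mono[OF finite sub])
    then have "0 \<le> Re (trc \<rho>' B)" using less.hyps herm' psd' pB by blast
    moreover have "0 \<le> Re (sandwich w B)" using pB unfolding psdf_def by blast
    ultimately show ?thesis using trsplit by simp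
  qed
qed


definition Pm :: "('n \<Rightarrow> complex^'n) \<Rightarrow> 'n set \<Rightarrow> complex^'n^'n" where
  "Pm v S = (\<chi> k l. \<Sum>i\<in>S. v i $ k * cnj (v i $ l))"

lemma sandwich_Pm: "sandwich x (Pm v S) = of_real (\<Sum>i\<in>S. (cmod (braket (v i) x))^2)"
proof -
  have "sandwich x (Pm v S) = (\<Sum>k\<in>UNIV. \<Sum>l\<in>UNIV. \<Sum>i\<in>S. cnj (x$k) * v i $ k * (cnj (v i $ l) * x$l))"
    unfolding sandwich_def Pm_def by (simp add: sum_distrib_left sum_distrib_right mult_ac)
  also have "\<dots> = (\<Sum>k\<in>UNIV. \<Sum>i\<in>S. \<Sum>l\<in>UNIV. cnj (x$k) * v i $ k * (cnj (v i $ l) * x$l))"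
    by (rule sum.cong[OF refl], rule sum.swap)
  also have "\<dots> = (\<Sum>i\<in>S. \<Sum>k\<in>UNIV. \<Sum>l\<in>UNIV. cnj (x$k) * v i $ k * (cnj (v i $ l) * x$l))"
    by (rule sum.swap)
  also have "\<dots> = (\<Sum>i\<in>S. cnj (braket (v i) x) * braket (v i) x)"
    unfolding braket_def cnj_sum sum_product by (simp add: mult_ac)
  also have "\<dots> = of_real (\<Sum>i\<in>S. (cmod (braket (v i) x))^2)"
    unfolding of_real_sum by (simp add: cms2)
  finally show ?thesis .
qed

lemma trc_Pm: "trc \<rho> (Pm v S) = (\<Sum>i\<in>S. sandwich (v i) \<rho>)"
proof -
  have "trc \<rho> (Pm v S) = (\<Sum>k\<in>UNIV. \<Sum>l\<in>UNIV. \<Sum>i\<in>S. cnj (v i $ k) * \<rho>$k$l * v i $ l)"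
    unfolding trc_def Pm_def by (simp add: sum_distrib_left mult_ac)
  also have "\<dots> = (\<Sum>k\<in>UNIV. \<Sum>i\<in>S. \<Sum>l\<in>UNIV. cnj (v i $ k) * \<rho>$k$l * v i $ l)"
    by (rule sum.cong[OF refl], rule sum.swap)
  also have "\<dots> = (\<Sum>i\<in>S. \<Sum>k\<in>UNIV. \<Sum>l\<in>UNIV. cnj (v i $ k) * \<rho>$k$l * v i $ l)"
    by (rule sum.swap)
  finally show ?thesis unfolding sandwich_def .
qed

lemma complete_ons:
  fixes a :: "'n::finite \<Rightarrow> complex^'n"
  assumes "orthonormal_basis_fam a"
  shows "(\<Sum>i\<in>UNIV. a i $ k * cnj (a i $ l)) = (if k = l then 1 else 0)"
proof -
  define Am :: "complex^'n^'n" where "Am = (\<chi> k i. a i $ k)"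
  define AH :: "complex^'n^'n" where "AH = (\<chi> i k. cnj (a i $ k))"
  have "AH ** Am = mat 1"
    using assms unfolding orthonormal_basis_fam_def braket_def
    by (simp add: vec_eq_iff matrix_matrix_mult_def mat_def Am_def AH_def)
  then have "Am ** AH = mat 1" by (simp add: matrix_left_right_inverse)
  then have "(Am ** AH) $ k $ l = mat 1 $ k $ l" by simp
  then show ?thesis by (simp add: matrix_matrix_mult_def mat_def Am_def AH_def)
qed

lemma sum_sandwich_basis:
  assumes "orthonormal_basis_fam a"
  shows "(\<Sum>i\<in>UNIV. sandwich (a i) \<rho>) = (\<Sum>k\<in>UNIV. \<rho> $ k $ k)"
proof -
  have "(\<Sum>i\<in>UNIV. sandwich (a i) \<rho>) = trc \<rho> (Pm a UNIV)" by (simp add: trc_Pm)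
  also have "\<dots> = (\<Sum>k\<in>UNIV. \<Sum>l\<in>UNIV. \<rho>$k$l * (if l = k then 1 else 0))"
    unfolding trc_def Pm_def by (simp add: complete_ons[OF assms])
  also have "\<dots> = (\<Sum>k\<in>UNIV. \<rho> $ k $ k)" by (simp add: if_distrib cong: if_cong)
  finally show ?thesis .
qed

lemma density_props:
  assumes "density_matrix \<rho>"
  shows "herm \<rho>" "psdf \<rho>" "(\<Sum>k\<in>UNIV. \<rho> $ k $ k) = 1"
  using assms unfolding density_matrix_def herm_def psdf_def by blast+

lemma sum_p_one:
  assumes "orthonormal_basis_fam a" "density_matrix \<rho>"
  shows "(\<Sum>i\<in>UNIV. Re (sandwich (a i) \<rho>)) = 1"
  using sum_sandwich_basis[OF assms(1), of \<rho>] density_props(3)[OF assms(2)]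
  by (metis Re_sum one_complex.sel(1))

lemma p_nonneg:
  assumes "density_matrix \<rho>" shows "0 \<le> Re (sandwich x \<rho>)"
  using density_props(2)[OF assms] unfolding psdf_def by blast

lemma ifm4: "a * (if P then c else 0) * b = (if P then a * c * b else (0::complex))" by simp
lemma ifm5: "a * (if P then c else 0) = (if P then a * c else (0::complex))" by simp

lemma sandwich_Bm:
  "sandwich x (\<chi> k l. (if k = l then c else 0) - (M$k$l + N$k$l))
     = c * of_real ((norm x)^2) - sandwich x M - sandwich x N"
proof -
  have "sandwich x (\<chi> k l. (if k = l then c else 0) - (M$k$l + N$k$l))
     = (\<Sum>k\<in>UNIV. \<Sum>l\<in>UNIV. cnj (x$k) * (if k = l then c else 0) * x$l) - sandwich x M - sandwich x N"
    unfolding sandwich_def by (simp add: ring_distribs sum_subtractf sum.distrib)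
  also have "(\<Sum>k\<in>UNIV. \<Sum>l\<in>UNIV. cnj (x$k) * (if k = l then c else 0) * x$l) = c * braket x x"
    unfolding braket_def ifm4 by (simp add: sum_distrib_left mult_ac)
  finally show ?thesis by (simp add: braket_self)
qed

lemma trc_Bm:
  "trc \<rho> (\<chi> k l. (if k = l then c else 0) - (M$k$l + N$k$l))
     = c * (\<Sum>k\<in>UNIV. \<rho>$k$k) - trc \<rho> M - trc \<rho> N"
proof -
  have "trc \<rho> (\<chi> k l. (if k = l then c else 0) - (M$k$l + N$k$l))
     = (\<Sum>k\<in>UNIV. \<Sum>l\<in>UNIV. \<rho>$k$l * (if l = k then c else 0)) - trc \<rho> M - trc \<rho> N"
    unfolding trc_def by (simp add: ring_distribs sum_subtractf sum.distrib)
  also have "(\<Sum>k\<in>UNIV. \<Sum>l\<in>UNIV. \<rho>$k$l * (if l = k then c else 0)) = c * (\<Sum>k\<in>UNIV. \<rho>$k$k)"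
    unfolding ifm5 by (simp add: sum_distrib_left mult_ac)
  finally show ?thesis .
qed

lemma main_bound:
  fixes a b :: "'n::finite \<Rightarrow> complex ^ 'n" and U \<rho> :: "complex^'n^'n"
  assumes oa: "orthonormal_basis_fam a" and ob: "orthonormal_basis_fam b"
    and Uab: "\<And>i j. U $ i $ j = braket (a i) (b j)"
    and dm: "density_matrix \<rho>"
  shows "(\<Sum>i\<in>R. Re (sandwich (a i) \<rho>)) + (\<Sum>j\<in>C. Re (sandwich (b j) \<rho>))
          \<le> 1 + submat_norm U R C"
proof -
  define c where "c = submat_norm U R C"
  define Bm :: "complex^'n^'n" where
    "Bm = (\<chi> k l. (if k = l then of_real (1 + c) else 0) - (Pm a R $k$l + Pm b C $k$l))"
  have "psdf Bm" unfolding psdf_def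
  proof
    fix x :: "complex^'n"
    have "Re (sandwich x Bm) = (1 + c) * (norm x)^2 - (\<Sum>i\<in>R. (cmod (braket (a i) x))^2)
           - (\<Sum>j\<in>C. (cmod (braket (b j) x))^2)"
      unfolding Bm_def sandwich_Bm sandwich_Pm by simp
    then show "0 \<le> Re (sandwich x Bm)"
      using pure_bound[OF oa ob Uab, where R=R and C=C and x=x] unfolding c_def by simp
  qed
  then have "0 \<le> Re (trc \<rho> Bm)"
    using psd_trace density_props[OF dm] by blast
  moreover have "Re (trc \<rho> Bm) = (1 + c) - (\<Sum>i\<in>R. Re (sandwich (a i) \<rho>)) - (\<Sum>j\<in>C. Re (sandwich (b j) \<rho>))"
    unfolding Bm_def trc_Bm trc_Pm density_props(3)[OF dm] by (simp add: Re_sum)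
  ultimately show ?thesis unfolding c_def by simp
qed


lemma unitary_braket:
  fixes U :: "complex^'n^'n"
  assumes u: "unitary_mat U"
  shows "braket (U *v z) (U *v z) = braket z z"
proof -
  have d: "(\<Sum>i\<in>UNIV. cnj (U$i$j) * U$i$j') = (if j = j' then 1 else 0)" for j j'
    using u unfolding unitary_mat_def by blast
  have "braket (U *v z) (U *v z) = (\<Sum>i\<in>UNIV. \<Sum>j\<in>UNIV. \<Sum>j'\<in>UNIV. cnj (U$i$j) * cnj (z$j) * (U$i$j' * z$j'))"
    unfolding braket_def matrix_vector_mult_def cnj_sum complex_cnj_mult by (simp add: sum_product)
  also have "\<dots> = (\<Sum>j\<in>UNIV. \<Sum>i\<in>UNIV. \<Sum>j'\<in>UNIV. cnj (U$i$j) * cnj (z$j) * (U$i$j' * z$j'))"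
    by (rule sum.swap)
  also have "\<dots> = (\<Sum>j\<in>UNIV. \<Sum>j'\<in>UNIV. \<Sum>i\<in>UNIV. cnj (U$i$j) * cnj (z$j) * (U$i$j' * z$j'))"
    by (rule sum.cong[OF refl], rule sum.swap)
  also have "\<dots> = (\<Sum>j\<in>UNIV. \<Sum>j'\<in>UNIV. cnj (z$j) * z$j' * (\<Sum>i\<in>UNIV. cnj (U$i$j) * U$i$j'))"
    by (simp add: sum_distrib_left mult_ac)
  also have "\<dots> = (\<Sum>j\<in>UNIV. cnj (z$j) * z$j)"
    unfolding d by (simp add: ifm5)
  finally show ?thesis unfolding braket_def .
qed

lemma unitary_norm:
  fixes U :: "complex^'n^'n"
  assumes "unitary_mat U" shows "norm (U *v z) = norm z"
proof -
  have "complex_of_real ((norm (U *v z))^2) = complex_of_real ((norm z)^2)"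
    using unitary_braket[OF assms, of z] by (metis braket_self)
  then have "(norm (U *v z))^2 = (norm z)^2" by (simp only: of_real_eq_iff)
  then show ?thesis by (simp add: power2_eq_iff_nonneg)
qed

lemma sum_restrict_C: "(\<Sum>j\<in>D. U $ i $ j * (if j \<in> C then x$j else 0)) = (\<Sum>j\<in>D \<inter> C. U $ i $ j * x$j)"
  for D C :: "'n::finite set" and U :: "complex^'n^'n"
  by (simp add: ifm5 sum.inter_restrict[symmetric] Int_commute)

lemma norm_P_le: "norm (\<chi> j. if j \<in> C then x$j else 0) \<le> norm (x :: complex^'n)"
  by (rule norm_vec_mono) simp

lemma submat_le1:
  fixes U :: "complex^'n^'n" assumes u: "unitary_mat U"
  shows "submat_norm U R C \<le> 1"
  unfolding submat_norm_Fm
proof (rule onorm_le)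
  fix x :: "complex^'n"
  define P where "P = (\<chi> j. if j \<in> C then x$j else (0::complex))"
  have "norm (Fm U R C x) \<le> norm (U *v P)"
    by (rule norm_vec_mono) (simp add: Fm_def matrix_vector_mult_def P_def sum_restrict_C)
  also have "\<dots> = norm P" by (rule unitary_norm[OF u])
  also have "\<dots> \<le> norm x" unfolding P_def by (rule norm_P_le)
  finally show "norm (Fm U R C x) \<le> 1 * norm x" by simp
qed

lemma submat_col_ge1:
  fixes U :: "complex^'n^'n" assumes u: "unitary_mat U"
  shows "1 \<le> submat_norm U UNIV {j}"
proof -
  have e: "Fm U UNIV {j} (axis j 1) = U *v axis j 1"
    by (simp add: vec_eq_iff Fm_def matrix_vector_mult_def axis_def ifm5)
  have "1 = norm (Fm U UNIV {j} (axis j (1::complex)))"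
    unfolding e unitary_norm[OF u] by (simp add: norm_axis_1)
  also have "\<dots> \<le> submat_norm U UNIV {j} * norm (axis j (1::complex))" by (rule Fm_bound)
  finally show ?thesis by (simp add: norm_axis_1)
qed

lemma submat_mono_R:
  fixes U :: "complex^'n^'n" assumes "R \<subseteq> R'"
  shows "submat_norm U R C \<le> submat_norm U R' C"
  unfolding submat_norm_Fm[of U R C]
proof (rule onorm_le)
  fix x :: "complex^'n"
  have "norm (Fm U R C x) \<le> norm (Fm U R' C x)"
    by (rule norm_vec_mono) (use assms in \<open>auto simp: Fm_def\<close>)
  also have "\<dots> \<le> submat_norm U R' C * norm x" by (rule Fm_bound)
  finally show "norm (Fm U R C x) \<le> submat_norm U R' C * norm x" .
qed

lemma submat_mono_C:
  fixes U :: "complex^'n^'n" assumes CC: "C \<subseteq> C'"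
  shows "submat_norm U R C \<le> submat_norm U R C'"
  unfolding submat_norm_Fm[of U R C]
proof (rule onorm_le)
  fix x :: "complex^'n"
  define P where "P = (\<chi> j. if j \<in> C then x$j else (0::complex))"
  have "Fm U R C x = Fm U R C' P"
    using CC by (simp add: vec_eq_iff Fm_def P_def sum_restrict_C Int_absorb1)
  then have "norm (Fm U R C x) \<le> submat_norm U R C' * norm P" by (simp add: Fm_bound)
  also have "\<dots> \<le> submat_norm U R C' * norm x"
    unfolding P_def by (intro mult_left_mono norm_P_le submat_norm_nonneg)
  finally show "norm (Fm U R C x) \<le> submat_norm U R C' * norm x" .
qed

definition SS :: "complex^'n::finite^'n \<Rightarrow> nat \<Rightarrow> ('n set \<times> 'n set) set" where
  "SS U k = {(R, C). R \<noteq> {} \<and> C \<noteq> {} \<and> card R + card C = k + 1}"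

lemma s_val_alt: "s_val U k = Max ((\<lambda>(R,C). submat_norm U R C) ` SS U k)"
  unfolding s_val_def SS_def
  by (rule arg_cong[where f=Max]) (auto simp: image_def)

lemma SS_finite: "finite ((\<lambda>(R,C). submat_norm U R C) ` SS U k)"
  by (rule finite_imageI) (rule finite_subset[of _ UNIV], auto)

lemma SS_nonempty:
  fixes U :: "complex^'n::finite^'n"
  assumes "1 \<le> k" "k \<le> CARD('n)"
  shows "SS U k \<noteq> {}"
proof -
  obtain C :: "'n set" where C: "C \<subseteq> UNIV" "card C = k"
    using obtain_subset_with_card_n[of k "UNIV :: 'n set"] assms by auto
  have "C \<noteq> {}" using C assms by auto
  then have "({undefined}, C) \<in> SS U k" using C by (simp add: SS_def)
  then show ?thesis by blast
qed

lemma s_ge: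
  fixes U :: "complex^'n::finite^'n"
  assumes "R \<noteq> {}" "C \<noteq> {}" "card R + card C = k + 1"
  shows "submat_norm U R C \<le> s_val U k"
proof -
  have "(R, C) \<in> SS U k" using assms by (simp add: SS_def)
  then have "submat_norm U R C \<in> (\<lambda>(R,C). submat_norm U R C) ` SS U k"
    by (metis (no_types, lifting) case_prod_conv image_eqI)
  then show ?thesis unfolding s_val_alt by (rule Max_ge[OF SS_finite])
qed

lemma s_witness:
  fixes U :: "complex^'n::finite^'n"
  assumes "1 \<le> k" "k \<le> CARD('n)"
  obtains R C where "R \<noteq> {}" "C \<noteq> {}" "card R + card C = k + 1" "s_val U k = submat_norm U R C"
proof -
  have "s_val U k \<in> (\<lambda>(R,C). submat_norm U R C) ` SS U k"
    unfolding s_val_alt by (rule Max_in[OF SS_finite]) (use SS_nonempty[OF assms] in simp)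
  then obtain p where p: "p \<in> SS U k" "s_val U k = (\<lambda>(R,C). submat_norm U R C) p" by blast
  obtain R C where "p = (R, C)" by fastforce
  then have "R \<noteq> {} \<and> C \<noteq> {} \<and> card R + card C = k + 1 \<and> s_val U k = submat_norm U R C"
    using p by (simp add: SS_def)
  then show ?thesis using that by blast
qed

lemma s_nonneg:
  fixes U :: "complex^'n::finite^'n"
  assumes "1 \<le> k" "k \<le> CARD('n)"
  shows "0 \<le> s_val U k"
proof -
  obtain R C where "s_val U k = submat_norm U R C"
    using s_witness[OF assms] by metis
  then show ?thesis using submat_norm_nonneg[of U R C] by simp
qed

lemma s_mono:
  fixes U :: "complex^'n::finite^'n"
  assumes k1: "1 \<le> k" and kd: "k + 1 \<le> CARD('n)"
  shows "s_val U k \<le> s_val U (k + 1)"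
proof -
  obtain R C where RC: "R \<noteq> {}" "C \<noteq> {}" "card R + card C = k + 1" "s_val U k = submat_norm U R C"
    using s_witness[OF k1, of U] kd by auto
  show ?thesis
  proof (cases "R = UNIV")
    case False
    then obtain r where r: "r \<notin> R" by auto
    have "card (insert r R) = card R + 1" using r by simp
    then have "submat_norm U (insert r R) C \<le> s_val U (k + 1)"
      using RC by (intro s_ge) auto
    moreover have "submat_norm U R C \<le> submat_norm U (insert r R) C" by (rule submat_mono_R) auto
    ultimately show ?thesis using RC by simp
  next
    case True
    have "C \<noteq> UNIV"
    proof
      assume "C = UNIV"
      then have "card R + card C = 2 * CARD('n)" using True by simp
      then show False using RC kd by simp
    qed
    then obtain c where c: "c \<notin> C" by auto
    have "card (insert c C) = card C + 1" using c by simp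
    then have "submat_norm U R (insert c C) \<le> s_val U (k + 1)"
      using RC by (intro s_ge) auto
    moreover have "submat_norm U R C \<le> submat_norm U R (insert c C)" by (rule submat_mono_C) auto
    ultimately show ?thesis using RC by simp
  qed
qed

lemma s_top:
  fixes U :: "complex^'n::finite^'n"
  assumes u: "unitary_mat U"
  shows "s_val U CARD('n) = 1"
proof (rule antisym)
  have "0 < CARD('n)" by simp
  then have d1: "1 \<le> CARD('n)" by linarith
  obtain R C where RC: "s_val U CARD('n) = submat_norm U R C"
    using s_witness[OF d1 le_refl, of U] by metis
  then show "s_val U CARD('n) \<le> 1" using submat_le1[OF u] by simp
  have "card (UNIV :: 'n set) + card {undefined :: 'n} = CARD('n) + 1" by simp
  then have "submat_norm U UNIV {undefined} \<le> s_val U CARD('n)" by (intro s_ge) auto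
  then show "1 \<le> s_val U CARD('n)" using submat_col_ge1[OF u, of undefined] by linarith
qed

lemma W_nonneg:
  fixes U :: "complex^'n::finite^'n"
  assumes "1 \<le> k" "k \<le> CARD('n)"
  shows "0 \<le> W_vec U k"
proof (cases "k = 1")
  case True then show ?thesis using s_nonneg[OF assms] by (simp add: W_vec_def)
next
  case False
  then have "s_val U (k - 1) \<le> s_val U (k - 1 + 1)" using assms by (intro s_mono) auto
  then show ?thesis using False assms by (simp add: W_vec_def)
qed

lemma W_sum:
  fixes U :: "complex^'n::finite^'n"
  assumes "1 \<le> j"
  shows "(\<Sum>k=1..j. W_vec U k) = s_val U j"
  using assms
proof (induction j)
  case 0 then show ?case by simp
next
  case (Suc j)
  show ?case
  proof (cases "j = 0")
    case True then show ?thesis by (simp add: W_vec_def)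
  next
    case False
    then have "(\<Sum>k=1..Suc j. W_vec U k) = s_val U j + W_vec U (Suc j)"
      using Suc by simp
    then show ?thesis using False by (simp add: W_vec_def)
  qed
qed


lemma tsallis_sum:
  assumes "finite I" "(\<Sum>i\<in>I. x i) = 1"
  shows "tsallis a I x = (\<Sum>i\<in>I. tf a (x i))"
proof (cases "a = 1")
  case True
  have "(\<Sum>i\<in>I. tf a (x i)) = (\<Sum>i\<in>I. - (if x i = 0 then 0 else x i * ln (x i)))"
    using True by (intro sum.cong) (auto simp: tf_def)
  then show ?thesis by (simp add: tsallis_def True sum_negf)
next
  case False
  have "tsallis a I x = ((\<Sum>i\<in>I. x i powr a) - (\<Sum>i\<in>I. x i)) / (1 - a)"
    using False assms(2) by (simp add: tsallis_def)
  also have "\<dots> = (\<Sum>i\<in>I. tf a (x i))"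
    using False by (simp add: tf_def sum_subtractf[symmetric] sum_divide_distrib)
  finally show ?thesis .
qed

lemma Ypart:
  fixes W :: "nat \<Rightarrow> real"
  assumes "1 \<le> k"
  shows "(\<Sum>i<k. (if i = 0 then 1 else if i \<le> d then W i else 0)) = 1 + (\<Sum>m=1..min (k - 1) d. W m)"
  using assms
proof (induction k)
  case 0 then show ?case by simp
next
  case (Suc k)
  show ?case
  proof (cases "k = 0")
    case True then show ?thesis by simp
  next
    case False
    have IH: "(\<Sum>i<k. (if i = 0 then 1 else if i \<le> d then W i else 0)) = 1 + (\<Sum>m=1..min (k - 1) d. W m)"
      using Suc False by simp
    show ?thesis
    proof (cases "k \<le> d")
      case True
      have "min (k - 1) d = k - 1" "min (Suc k - 1) d = Suc (k - 1)" using True False by auto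
      moreover have "(\<Sum>m=1..k. W m) = (\<Sum>m=1..k-1. W m) + W k"
        using False by (cases k) (auto simp: sum.cl_ivl_Suc)
      ultimately show ?thesis using IH True False by simp
    next
      case f2: False
      have "min (k - 1) d = d" "min (Suc k - 1) d = d" using f2 by auto
      then show ?thesis using IH f2 False by simp
    qed
  qed
qed

theorem theorem3:
  fixes a b :: "'n::finite \<Rightarrow> complex ^ 'n"
    and \<rho> :: "complex ^ 'n ^ 'n"
    and U :: "complex ^ 'n ^ 'n"
    and \<alpha> :: real
  assumes "orthonormal_basis_fam a" and "orthonormal_basis_fam b"
    and "\<And>i j. U $ i $ j = braket (a i) (b j)"
    and "unitary_mat U"
    and "density_matrix \<rho>"
    and "\<alpha> \<ge> 0"
  shows "tsallis \<alpha> UNIV (\<lambda>i. Re (sandwich (a i) \<rho>)) + tsallis \<alpha> UNIV (\<lambda>j. Re (sandwich (b j) \<rho>))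
         \<ge> tsallis \<alpha> {1..CARD('n)} (W_vec U)"
proof -
  note oa = assms(1) and ob = assms(2) and Uab = assms(3) and uU = assms(4) and dm = assms(5)
    and a0 = assms(6)
  define d where "d = CARD('n)"
  define n where "n = 2 * d"
  define p where "p i = Re (sandwich (a i) \<rho>)" for i
  define q where "q j = Re (sandwich (b j) \<rho>)" for j
  define xv :: "'n + 'n \<Rightarrow> real" where "xv = case_sum p q"
  have d1: "1 \<le> d" unfolding d_def using zero_less_card_finite[where 'a='n] by linarith
  have p0: "0 \<le> p i" for i unfolding p_def by (rule p_nonneg[OF dm])
  have q0: "0 \<le> q i" for i unfolding q_def by (rule p_nonneg[OF dm])
  have ps: "(\<Sum>i\<in>UNIV. p i) = 1" unfolding p_def by (rule sum_p_one[OF oa dm])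
  have qs: "(\<Sum>i\<in>UNIV. q i) = 1" unfolding q_def by (rule sum_p_one[OF ob dm])
  have xv0: "0 \<le> xv j" for j unfolding xv_def using p0 q0 by (cases j) auto
  have sumUNIV: "(\<Sum>j\<in>UNIV. g j) = (\<Sum>i\<in>UNIV. g (Inl i)) + (\<Sum>i\<in>UNIV. g (Inr i))"
    for g :: "'n + 'n \<Rightarrow> real"
    by (subst UNIV_Plus_UNIV[symmetric], subst sum.Plus) auto
  have xvtot: "(\<Sum>j\<in>UNIV. xv j) = 2" unfolding sumUNIV xv_def using ps qs by simp
  obtain xs :: "('n + 'n) list" where xs: "distinct xs" "set xs = UNIV"
    using finite_distinct_list[of "UNIV :: ('n + 'n) set"] by auto
  define L where "L = sort_key (\<lambda>j. - xv j) xs"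
  have Ld: "distinct L" and Ls: "set L = UNIV" using xs by (simp_all add: L_def)
  have Ll: "length L = n"
  proof -
    have "length L = card (set L)" using Ld by (simp add: distinct_card)
    also have "\<dots> = d + d" unfolding Ls d_def by (simp add: card_UNIV_sum)
    finally show ?thesis by (simp add: n_def)
  qed
  have Lsort: "sorted (map (\<lambda>j. - xv j) L)" unfolding L_def by (rule sorted_sort_key)
  define x where "x i = xv (L ! i)" for i
  define y where "y i = (if i = 0 then 1 else if i \<le> d then W_vec U i else 0)" for i
  have bij: "bij_betw ((!) L) {..<n} UNIV" using Ld Ls Ll by (intro bij_betw_nth) auto
  have reidx: "(\<Sum>i<n. g (L ! i)) = (\<Sum>j\<in>UNIV. g j)" for g :: "'n + 'n \<Rightarrow> real"
    by (rule sum.reindex_bij_betw[OF bij])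
  have dec: "x j \<le> x i" if "i \<le> j" "j < n" for i j
  proof -
    have "map (\<lambda>j. - xv j) L ! i \<le> map (\<lambda>j. - xv j) L ! j"
      using sorted_nth_mono[OF Lsort, of i j] that Ll by simp
    then show ?thesis using that Ll by (simp add: x_def)
  qed
  have Ssum: "(\<Sum>m=1..j. W_vec U m) = s_val U j" if "1 \<le> j" for j by (rule W_sum[OF that])
  have Wnn: "0 \<le> (\<Sum>m=1..j. W_vec U m)" if "j \<le> d" for j
    using that W_nonneg[of _ U] unfolding d_def by (intro sum_nonneg) auto
  have Y: "(\<Sum>i<k. y i) = 1 + (\<Sum>m=1..min (k - 1) d. W_vec U m)" if "1 \<le> k" for k
    unfolding y_def by (rule Ypart[OF that])
  have Sd: "(\<Sum>m=1..d. W_vec U m) = 1" using Ssum[OF d1] s_top[OF uU] by (simp add: d_def)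
  have part: "(\<Sum>i<k. x i) \<le> (\<Sum>i<k. y i)" if kn: "k \<le> n" for k
  proof (cases "k = 0")
    case True then show ?thesis by simp
  next
    case False
    define S where "S = (!) L ` {..<k}"
    have inj: "inj_on ((!) L) {..<k}"
      using bij_betw_imp_inj_on[OF bij] kn by (auto intro: inj_on_subset)
    have XS: "(\<Sum>i<k. x i) = (\<Sum>j\<in>S. xv j)"
      unfolding S_def x_def by (simp add: sum.reindex[OF inj])
    have cS: "card S = k" unfolding S_def using card_image[OF inj] by simp
    define R where "R = Inl -` S"
    define C where "C = Inr -` S"
    have SRC: "S = R <+> C"
    proof (rule set_eqI)
      fix z show "z \<in> S \<longleftrightarrow> z \<in> R <+> C" by (cases z) (auto simp: R_def C_def)
    qed
    have XRC: "(\<Sum>j\<in>S. xv j) = (\<Sum>i\<in>R. p i) + (\<Sum>i\<in>C. q i)"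
      unfolding SRC by (subst sum.Plus) (auto simp: xv_def)
    have cRC: "card R + card C = k" using cS unfolding SRC by (simp add: card_Plus)
    have pR: "(\<Sum>i\<in>R. p i) \<le> 1" using ps p0 by (metis sum_mono2 finite subset_UNIV)
    have qC: "(\<Sum>i\<in>C. q i) \<le> 1" using qs q0 by (metis sum_mono2 finite subset_UNIV)
    show ?thesis
    proof (cases "d \<le> k - 1")
      case True
      then have "(\<Sum>i<k. y i) = 2" using Y[of k] False Sd by (simp add: min_absorb2)
      moreover have "(\<Sum>j\<in>S. xv j) \<le> (\<Sum>j\<in>UNIV. xv j)"
        using xv0 by (intro sum_mono2) auto
      ultimately show ?thesis using XS xvtot by simp
    next
      case f2: False
      then have Yk: "(\<Sum>i<k. y i) = 1 + (\<Sum>m=1..k - 1. W_vec U m)" using Y[of k] False by simp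
      show ?thesis
      proof (cases "R = {} \<or> C = {}")
        case True
        then have "(\<Sum>j\<in>S. xv j) \<le> 1" using XRC pR qC by auto
        moreover have "0 \<le> (\<Sum>m=1..k - 1. W_vec U m)" using f2 by (intro Wnn) simp
        ultimately show ?thesis using XS Yk by simp
      next
        case f3: False
        then have "card R \<ge> 1" "card C \<ge> 1" by (auto simp: card_gt_0_iff Suc_le_eq)
        then have k2: "2 \<le> k" using cRC by simp
        have "(\<Sum>j\<in>S. xv j) \<le> 1 + submat_norm U R C"
          unfolding XRC p_def q_def by (rule main_bound[OF oa ob Uab dm])
        also have "submat_norm U R C \<le> s_val U (k - 1)"
          using f3 cRC k2 by (intro s_ge) auto
        also have "s_val U (k - 1) = (\<Sum>m=1..k - 1. W_vec U m)" using Ssum[of "k - 1"] k2 by simp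
        finally show ?thesis using XS Yk by simp
      qed
    qed
  qed
  have totx: "(\<Sum>i<n. x i) = 2" unfolding x_def reidx xvtot ..
  have toty: "(\<Sum>i<n. y i) = 2"
  proof -
    have "min (n - 1) d = d" using d1 by (simp add: n_def)
    then show ?thesis using Y[of n] d1 Sd by (simp add: n_def)
  qed
  have y0: "0 \<le> y i" for i
    unfolding y_def using W_nonneg[of i U] by (auto simp: d_def)
  have K: "(\<Sum>i<n. tf \<alpha> (y i)) \<le> (\<Sum>i<n. tf \<alpha> (x i))"
    by (rule karamata[OF a0 dec]) (use xv0 y0 part totx toty in \<open>auto simp: x_def\<close>)
  have lhs: "(\<Sum>i<n. tf \<alpha> (x i)) = tsallis \<alpha> UNIV p + tsallis \<alpha> UNIV q"
    unfolding x_def reidx[of "\<lambda>j. tf \<alpha> (xv j)"] sumUNIV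
    by (simp add: xv_def tsallis_sum[OF _ ps] tsallis_sum[OF _ qs])
  have rhs: "(\<Sum>i<n. tf \<alpha> (y i)) = tsallis \<alpha> {1..d} (W_vec U)"
  proof -
    have "(\<Sum>i<n. tf \<alpha> (y i)) = (\<Sum>i<n. if i \<in> {1..d} then tf \<alpha> (W_vec U i) else 0)"
      by (intro sum.cong) (auto simp: y_def)
    also have "\<dots> = (\<Sum>i\<in>{..<n} \<inter> {1..d}. tf \<alpha> (W_vec U i))"
      by (simp add: sum.inter_restrict)
    also have "{..<n} \<inter> {1..d} = {1..d}" using d1 by (auto simp: n_def)
    also have "(\<Sum>i\<in>{1..d}. tf \<alpha> (W_vec U i)) = tsallis \<alpha> {1..d} (W_vec U)"
      by (rule tsallis_sum[symmetric]) (use Sd in simp_all)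
    finally show ?thesis .
  qed
  show ?thesis using K lhs rhs unfolding p_def q_def d_def by simp
qed


end
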